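(* Let $c\in[0,1]$ with $c\neq\frac12$, and define $f_c:[0,1]\to[0,1]$ by $$f_c(x)=\begin{cases} x, & x\in[0,\frac23),\\ (1-2c)x^2+2cx, & x\in[\frac23,1].\end{cases}$$ Let $f_c^n$ denote the $n$-fold composition of $f_c$ with itself and $x^{(n)}=f_c^n(x^{(0)})$. Then: 1. The set of fixed points of $f_c$ is $[0,\frac23)\cup\{1\}$. 2. If $0\le c<\frac12$, then for every $x^{(0)}\in[\frac23,1)$ there exist $n\in\mathbb N$ and $p\in[\frac49(1+c),\frac23)$ such that $f_c^n(x^{(0)})=p$ and $f_c^{n+1}(x^{(0)})=f_c(p)=p$. 3. If $\frac12<c\le1$, then $\lim_{n\to\infty}x^{(n)}=1$ for every $x^{(0)}\in[\frac23,1]$.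
   Context: This map is the reduction to $[0,1]$ of the quadratic stochastic operator $x'=x^2+2p(x)xy$, $y'=2(1-p(x))xy+y^2$ (with $y=1-x$), where $p(x)=a$ for $x\le\frac13$, $b$ for $\frac13<x<\frac23$, $c$ for $x\ge\frac23$, in the case $a=b=\frac12$. *)

theory Defs
  imports "HOL-Analysis.Analysis"
begin

definition fc :: "real \<Rightarrow> real \<Rightarrow> real" where
  "fc c x = (if x < 2/3 then x else (1 - 2*c) * x^2 + 2*c*x)"

end

theory Submission
  imports Defs
begin

lemma part1:
  fixes c :: real
  assumes "c \<noteq> 1/2"
  shows "{x \<in> {0..1}. fc c x = x} = {0..<2/3} \<union> {1}"
proof (rule set_eqI, rule iffI)
  fix x assume "x \<in> {x \<in> {0..1}. fc c x = x}"
  hence x: "0 \<le> x" "x \<le> 1" "fc c x = x" by auto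
  show "x \<in> {0..<2/3} \<union> {1}"
  proof (cases "x < 2/3")
    case True then show ?thesis using x by auto
  next
    case False
    hence "(1 - 2*c) * x^2 + 2*c*x = x" using x by (simp add: fc_def)
    hence "(1 - 2*c) * (x * (x - 1)) = 0" by (simp add: algebra_simps power2_eq_square)
    moreover have "1 - 2*c \<noteq> 0" using assms by auto
    ultimately have "x * (x - 1) = 0" by simp
    hence "x = 1" using False by auto
    then show ?thesis by simp
  qed
next
  fix x assume "x \<in> {0..<2/3} \<union> {1::real}"
  then show "x \<in> {x \<in> {0..1}. fc c x = x}"
    by (auto simp: fc_def)
qed

lemma part2:
  fixes c x0 :: real
  assumes c0: "0 \<le> c" and c1: "c < 1/2" and x0: "2/3 \<le> x0" "x0 < 1"
  shows "\<exists>(n::nat) p. p \<in> {4/9 * (1 + c)..<2/3} \<and> (fc c ^^ n) x0 = p \<and>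
            (fc c ^^ (Suc n)) x0 = fc c p \<and> fc c p = p"
proof -
  define x where "x n = (fc c ^^ n) x0" for n
  define d where "d = (1 - 2*c) * (2/3) * (1 - x0)"
  have dpos: "d > 0" unfolding d_def using c1 x0 by auto
  have step: "x (Suc k) = x k - (1 - 2*c) * (x k * (1 - x k))" if "x k \<ge> 2/3" for k
    using that by (simp add: x_def fc_def algebra_simps power2_eq_square)
  have ind: "(\<forall>j<k. x j \<ge> 2/3) \<longrightarrow> x k \<le> x0 - real k * d" for k
  proof (induction k)
    case 0 then show ?case by (simp add: x_def)
  next
    case (Suc k)
    show ?case
    proof
      assume A: "\<forall>j<Suc k. 2/3 \<le> x j"
      hence xk: "x k \<le> x0 - real k * d" "x k \<ge> 2/3" using Suc by auto
      have "x k \<le> x0" using xk dpos by (smt (verit) of_nat_0_le_iff mult_nonneg_nonneg)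
      hence "(2/3) * (1 - x0) \<le> x k * (1 - x k)"
        using xk x0 by (intro mult_mono) auto
      hence "(1 - 2*c) * ((2/3) * (1 - x0)) \<le> (1 - 2*c) * (x k * (1 - x k))"
        using c1 by (intro mult_left_mono) auto
      hence "x (Suc k) \<le> x k - d"
        using step[OF xk(2)] unfolding d_def mult.assoc by linarith
      moreover have "x0 - real (Suc k) * d = (x0 - real k * d) - d" by (simp add: algebra_simps)
      ultimately show "x (Suc k) \<le> x0 - real (Suc k) * d" using xk(1) by linarith
    qed
  qed
  have ex: "\<exists>n. x n < 2/3"
  proof (rule ccontr)
    assume "\<not> ?thesis"
    hence all: "\<forall>j. x j \<ge> 2/3" by (auto simp: not_less)
    obtain k :: nat where k: "real k > x0 / d" using reals_Archimedean2 by blast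
    hence "real k * d > x0" using dpos by (simp add: field_simps)
    hence "x k < 0" using ind[of k] all by auto
    then show False using all[rule_format, of k] by linarith
  qed
  define n where "n = (LEAST n. x n < 2/3)"
  have xn: "x n < 2/3" unfolding n_def using LeastI_ex[OF ex] .
  have before: "\<forall>j<n. x j \<ge> 2/3" unfolding n_def using not_less_Least by (metis not_le)
  have "n \<noteq> 0" proof assume "n = 0" then show False using xn x0 by (simp add: x_def) qed
  then obtain m where m: "n = Suc m" by (cases n) auto
  have xm: "x m \<ge> 2/3" using before m by auto
  have "x m \<le> x0 - real m * d" using ind[of m] before m by auto
  hence xm1: "x m \<le> 1" using dpos x0 by (smt (verit) of_nat_0_le_iff mult_nonneg_nonneg)
  have xnm: "x n = (1 - 2*c) * (x m)^2 + 2*c*(x m)"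
    using xm m by (simp add: x_def fc_def)
  have "(1 - 2*c) * (4/9) \<le> (1 - 2*c) * (x m)^2"
  proof -
    have "(4/9::real) \<le> (x m)^2" using power_mono[OF xm, of 2] by (simp add: power2_eq_square)
    then show ?thesis using c1 by (intro mult_left_mono) auto
  qed
  moreover have "2*c*(2/3) \<le> 2*c*(x m)" using c0 xm by (intro mult_left_mono) auto
  moreover have "4/9 * (1 + c) = (1 - 2*c) * (4/9) + 2*c*(2/3)" by (simp add: field_simps)
  ultimately have lb: "x n \<ge> 4/9 * (1 + c)" using xnm by linarith
  have fp: "fc c (x n) = x n" using xn by (simp add: fc_def)
  show ?thesis
    apply (rule exI[of _ n], rule exI[of _ "x n"])
    using lb xn fp by (simp add: x_def)
qed

lemma part3:
  fixes c x0 :: real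
  assumes c1: "1/2 < c" and c2: "c \<le> 1" and x0: "2/3 \<le> x0" "x0 \<le> 1"
  shows "(\<lambda>n. (fc c ^^ n) x0) \<longlonglongrightarrow> 1"
proof -
  define x where "x n = (fc c ^^ n) x0" for n
  define r where "r = 1 - (2*c - 1) * (2/3)"
  have r: "0 \<le> r" "r < 1" unfolding r_def using c1 c2 by auto
  have ind: "2/3 \<le> x n \<and> x n \<le> 1 \<and> 1 - x n \<le> r^n * (1 - x0)" for n
  proof (induction n)
    case 0 then show ?case using x0 by (simp add: x_def)
  next
    case (Suc n)
    hence a: "2/3 \<le> x n" "x n \<le> 1" "1 - x n \<le> r^n * (1 - x0)" by auto
    have eq: "1 - x (Suc n) = (1 - x n) * (1 - (2*c-1) * x n)"
      using a by (simp add: x_def fc_def algebra_simps power2_eq_square)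
    have "(2*c-1) * x n \<le> 1 * 1" using a c1 c2 by (intro mult_mono) auto
    have "(2*c-1) * (2/3) \<le> (2*c-1) * x n" using a c1 by (intro mult_left_mono) auto
    hence f1: "1 - (2*c-1) * x n \<le> r" unfolding r_def by simp
    have f0: "0 \<le> 1 - (2*c-1) * x n" using \<open>(2*c-1) * x n \<le> 1 * 1\<close> by simp
    have "1 - x (Suc n) \<le> (1 - x n) * r" unfolding eq using a f1 by (intro mult_left_mono) auto
    also have "\<dots> \<le> r^n * (1 - x0) * r" using a r by (intro mult_right_mono) auto
    finally have g: "1 - x (Suc n) \<le> r^(Suc n) * (1 - x0)" by (simp add: algebra_simps)
    have "0 \<le> 1 - x (Suc n)" unfolding eq using a f0 by simp
    moreover have "x n \<le> x (Suc n)"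
    proof -
      have "0 \<le> (1 - x n) * ((2*c-1) * x n)" using a c1 by simp
      then show ?thesis using eq by (simp add: algebra_simps)
    qed
    ultimately show ?case using g a by auto
  qed
  have lim0: "(\<lambda>n. r^n * (1 - x0)) \<longlonglongrightarrow> 0"
    using LIMSEQ_power_zero[of r] r by (auto intro: tendsto_mult_left_zero)
  have "(\<lambda>n. 1 - x n) \<longlonglongrightarrow> 0"
    by (rule tendsto_sandwich[OF _ _ tendsto_const lim0]) (use ind in auto)
  hence "(\<lambda>n. 1 - (1 - x n)) \<longlonglongrightarrow> 1 - 0" by (intro tendsto_diff tendsto_const)
  then show ?thesis by (simp add: x_def)
qed

theorem theorem2p3:
  fixes c :: real
  assumes "0 \<le> c" and "c \<le> 1" and "c \<noteq> 1/2"
  shows "{x \<in> {0..1}. fc c x = x} = {0..<2/3} \<union> {1}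
    \<and> (c < 1/2 \<longrightarrow> (\<forall>x0 \<in> {2/3..<1}. \<exists>(n::nat) p.
            p \<in> {4/9 * (1 + c)..<2/3} \<and> (fc c ^^ n) x0 = p \<and>
            (fc c ^^ (Suc n)) x0 = fc c p \<and> fc c p = p))
    \<and> (1/2 < c \<longrightarrow> (\<forall>x0 \<in> {2/3..1}. (\<lambda>n. (fc c ^^ n) x0) \<longlonglongrightarrow> 1))"
  using part1[OF assms(3)] part2[OF assms(1)] part3[OF _ assms(2)] by auto

end
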